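(* Let $m\ge2$ and $G=CK(2m-1)$. If $B$ is a set of edges of $G$ having an edge in common with every simple Hamiltonian path of $G$, then $|B|\ge m$.
   Context: $CK(2m-1)$ is the complete convex geometric graph on $2m-1$ points in convex position in the plane, labelled cyclically $0,\dots,2m-2$ (elements of $\mathbb{Z}_{2m-1}$), with all segments between vertices as edges. A simple Hamiltonian path is a path through all vertices whose edges pairwise do not cross. *)

theory Defs
  imports Main
begin

text \<open>The complete convex geometric graph CK(n): vertices 0,...,n-1 in convex
position in cyclic order; edges are all 2-element subsets.\<close>

definition ck_edges :: "nat \<Rightarrow> nat set set" where
  "ck_edges n = {{a, b} | a b. a < n \<and> b < n \<and> a \<noteq> b}"

text \<open>Two segments between points in convex position cross iff their four
endpoints are distinct and interleave in the cyclic (equivalently, linear) order.\<close>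

definition crosses :: "nat set \<Rightarrow> nat set \<Rightarrow> bool" where
  "crosses e f \<longleftrightarrow> (\<exists>a b c d. a < c \<and> c < b \<and> b < d \<and>
      ((e = {a, b} \<and> f = {c, d}) \<or> (e = {c, d} \<and> f = {a, b})))"

definition path_edges :: "nat list \<Rightarrow> nat set set" where
  "path_edges p = {{p ! i, p ! Suc i} | i. Suc i < length p}"

definition simple_ham_path :: "nat \<Rightarrow> nat list \<Rightarrow> bool" where
  "simple_ham_path n p \<longleftrightarrow> distinct p \<and> set p = {0..<n} \<and>
      (\<forall>e \<in> path_edges p. \<forall>f \<in> path_edges p. \<not> crosses e f)"

end

theory Submission imports Defs begin

definition zw :: "nat \<Rightarrow> nat \<Rightarrow> nat" where
  "zw n j = (if even j then j div 2 else n - 1 - j div 2)"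
lemma zw_inj_aux:
  assumes lt: "(i::nat) < 2*k+1" "j < 2*k+1"
    and eq: "(if even i then i div 2 else 2*k - i div 2) = (if even j then j div 2 else 2*k - j div 2)"
  shows "i = j"
proof -
  define a where "a = i div 2"
  define b where "b = j div 2"
  have ia: "i = 2*a + i mod 2" "j = 2*b + j mod 2" unfolding a_def b_def by simp_all
  show ?thesis
  proof (cases "even i")
    case True
    then have i0: "i mod 2 = 0" by simp
    show ?thesis
    proof (cases "even j")
      case True
      then have "j mod 2 = 0" by simp
      moreover have "a = b" using eq \<open>even i\<close> True unfolding a_def b_def by simp
      ultimately show ?thesis using ia i0 by simp
    next
      case False
      then have j1: "j mod 2 = 1" by presburger
      have "a = 2*k - b" using eq \<open>even i\<close> False unfolding a_def b_def by simp
      then show ?thesis using ia i0 j1 lt by linarith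
    qed
  next
    case False
    then have i1: "i mod 2 = 1" by presburger
    show ?thesis
    proof (cases "even j")
      case True
      then have j0: "j mod 2 = 0" by simp
      have "2*k - a = b" using eq \<open>odd i\<close> True unfolding a_def b_def by simp
      then show ?thesis using ia i1 j0 lt by linarith
    next
      case False
      then have j1: "j mod 2 = 1" by presburger
      have "2*k - a = 2*k - b" using eq \<open>odd i\<close> False unfolding a_def b_def by simp
      then show ?thesis using ia i1 j1 lt by linarith
    qed
  qed
qed

lemma zw_inj: "odd n \<Longrightarrow> inj_on (zw n) {0..<n}"
proof (rule inj_onI)
  fix i j assume h: "odd n" "i \<in> {0..<n}" "j \<in> {0..<n}" "zw n i = zw n j"
  obtain k where k: "n = 2*k+1" using \<open>odd n\<close> oddE by blast
  have n1: "n - 1 = 2*k" using k by simp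
  have zi: "zw n i = (if even i then i div 2 else 2*k - i div 2)" "zw n j = (if even j then j div 2 else 2*k - j div 2)"
    unfolding zw_def n1 by simp_all
  have lt: "i < 2*k+1" "j < 2*k+1" using h(2,3) k by simp_all
  show "i = j" using h(4) unfolding zi by (rule zw_inj_aux[OF lt])
qed

definition zp :: "nat \<Rightarrow> nat \<Rightarrow> nat list" where
  "zp n r = map (\<lambda>j. (r + zw n j) mod n) [0..<n]"

lemma zw_lt: "odd n \<Longrightarrow> j < n \<Longrightarrow> zw n j < n"
  unfolding zw_def by auto

lemma zw_sum: "odd n \<Longrightarrow> Suc j < n \<Longrightarrow> zw n j + zw n (Suc j) = (if even j then n - 1 else n)"
  unfolding zw_def by auto

lemma mod_lt2: "(x::nat) < 2 * n \<Longrightarrow> x mod n = (if x < n then x else x - n)"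
  by (simp add: le_mod_geq)

lemma rot_inj: "(a::nat) < n \<Longrightarrow> b < n \<Longrightarrow> r < n \<Longrightarrow> (r + a) mod n = (r + b) mod n \<Longrightarrow> a = b"
  using mod_lt2[of "r+a" n] mod_lt2[of "r+b" n] by (auto split: if_splits)

lemma dbl_inj: "odd n \<Longrightarrow> (r::nat) < n \<Longrightarrow> r' < n \<Longrightarrow> (2*r) mod n = (2*r') mod n \<Longrightarrow> r = r'"
proof -
  assume h: "odd n" "r < n" "r' < n" "(2*r) mod n = (2*r') mod n"
  have e: "2*r = 2*r' \<or> 2*r + n = 2*r' \<or> 2*r = 2*r'+n"
    using h mod_lt2[of "2*r" n] mod_lt2[of "2*r'" n] by (auto split: if_splits)
  obtain k where k: "n = 2*k+1" using h(1) oddE by blast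
  show "r = r'" using e unfolding k by presburger
qed

lemma no_cross_lin:
  fixes r u s t k n :: nat
  assumes "r \<in> {t, s}" "u \<in> {t, s}" "(s = Suc t \<and> Suc t < n) \<or> (s = 0 \<and> Suc t = n)"
    "(u = r + k \<and> r + k < n) \<or> (u + n = r + k)" "2 \<le> k" "k + 2 \<le> n" "r < n" "t < n"
  shows False
  using assms by auto

lemma no_cross_arith:
  fixes a b c d n t :: nat
  assumes "a < c" "c < b" "b < d" "d < n"
    and "(a + b) mod n \<in> {t, Suc t mod n}" "(c + d) mod n \<in> {t, Suc t mod n}" "t < n"
  shows False
proof -
  define k where "k = c + d - (a + b)"
  have k: "c + d = a + b + k" "2 \<le> k" "k + 2 \<le> n"
    using assms(1-4) unfolding k_def by linarith+
  define r where "r = (a+b) mod n"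
  have r: "r < n" using assms unfolding r_def by simp
  have u: "(c+d) mod n = (r + k) mod n" using k(1) unfolding r_def by (simp add: mod_add_left_eq)
  have s: "(Suc t mod n = Suc t \<and> Suc t < n) \<or> (Suc t mod n = 0 \<and> Suc t = n)"
  proof (cases "Suc t < n")
    case False
    then have "Suc t = n" using assms(7) by linarith
    then show ?thesis by simp
  qed simp
  have uu: "((r+k) mod n = r + k \<and> r + k < n) \<or> ((r+k) mod n + n = r + k)"
    using mod_lt2[of "r+k" n] r k by (auto split: if_splits)
  show False
    using no_cross_lin[OF _ _ s uu k(2) k(3) r assms(7)] assms(5,6) u unfolding r_def by simp
qed


lemma pair_sum: "{a, b} = {x, y::nat} \<Longrightarrow> a + b = x + y"
  by (auto simp: doubleton_eq_iff)

lemma zp_len: "length (zp n r) = n" unfolding zp_def by simp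

lemma zp_nth: "j < n \<Longrightarrow> zp n r ! j = (r + zw n j) mod n" unfolding zp_def by simp

lemma zp_inj: "odd n \<Longrightarrow> r < n \<Longrightarrow> inj_on (\<lambda>j. (r + zw n j) mod n) {0..<n}"
proof (rule inj_onI)
  fix i j assume h: "odd n" "r < n" "i \<in> {0..<n}" "j \<in> {0..<n}" "(r + zw n i) mod n = (r + zw n j) mod n"
  have "zw n i = zw n j" using rot_inj[OF zw_lt[OF h(1)] zw_lt[OF h(1)] h(2) h(5)] h by simp
  then show "i = j" using zw_inj[OF h(1)] h(3,4) by (auto dest: inj_onD)
qed

lemma zp_distinct: "odd n \<Longrightarrow> r < n \<Longrightarrow> distinct (zp n r)"
  unfolding zp_def by (simp add: distinct_map zp_inj)

lemma zp_set: "odd n \<Longrightarrow> r < n \<Longrightarrow> set (zp n r) = {0..<n}"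
proof -
  assume h: "odd n" "r < n"
  have s: "set (zp n r) = (\<lambda>j. (r + zw n j) mod n) ` {0..<n}" unfolding zp_def by simp
  have n0: "n > 0" using h by (cases n) auto
  have sub: "set (zp n r) \<subseteq> {0..<n}" unfolding s using n0 by auto
  have "card (set (zp n r)) = n" unfolding s using card_image[OF zp_inj[OF h]] by simp
  then show ?thesis using card_subset_eq[OF _ sub] by simp
qed

lemma zp_edge:
  assumes "odd n" "r < n" "e \<in> path_edges (zp n r)"
  shows "\<exists>x y. e = {x, y} \<and> x \<noteq> y \<and> x < n \<and> y < n \<and>
     (x + y) mod n \<in> {(2*r+n-1) mod n, Suc ((2*r+n-1) mod n) mod n}"
proof -
  obtain i where i: "e = {zp n r ! i, zp n r ! Suc i}" "Suc i < length (zp n r)"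
    using assms(3) unfolding path_edges_def by blast
  have iL: "Suc i < n" using i(2) zp_len by metis
  define x where "x = zp n r ! i"
  define y where "y = zp n r ! Suc i"
  have xy: "x \<in> set (zp n r)" "y \<in> set (zp n r)" unfolding x_def y_def using i(2) by auto
  have xn: "x < n" "y < n" using xy zp_set[OF assms(1,2)] by auto
  have ne: "x \<noteq> y" unfolding x_def y_def using zp_distinct[OF assms(1,2)] i(2)
    by (simp add: nth_eq_iff_index_eq)
  have n0: "n > 0" using assms by (cases n) auto
  have "(x + y) mod n = (r + zw n i + (r + zw n (Suc i))) mod n"
    unfolding x_def y_def using iL by (simp add: zp_nth mod_add_eq)
  also have "\<dots> = (2*r + (zw n i + zw n (Suc i))) mod n"
    by (rule arg_cong[where f="\<lambda>x. x mod n"]) simp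
  finally have sm: "(x + y) mod n = (2*r + (if even i then n - 1 else n)) mod n"
    using zw_sum[OF assms(1) iL] by simp
  have suc: "Suc ((2*r+n-1) mod n) mod n = (2*r) mod n"
  proof -
    have "Suc ((2*r+n-1) mod n) mod n = Suc (2*r+n-1) mod n" by (simp add: mod_Suc_eq)
    also have "Suc (2*r+n-1) = 2*r + n" using n0 by simp
    finally show ?thesis by simp
  qed
  have "(x + y) mod n \<in> {(2*r+n-1) mod n, Suc ((2*r+n-1) mod n) mod n}"
    unfolding suc using sm n0 by (cases "even i") auto
  then show ?thesis using i(1) ne xn unfolding x_def y_def by blast
qed

lemma zp_ham: assumes "odd n" "r < n" shows "simple_ham_path n (zp n r)"
  unfolding simple_ham_path_def
proof (intro conjI ballI)
  show "distinct (zp n r)" using zp_distinct[OF assms] .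
  show "set (zp n r) = {0..<n}" using zp_set[OF assms] .
  fix e f assume e: "e \<in> path_edges (zp n r)" and f: "f \<in> path_edges (zp n r)"
  define t where "t = (2*r+n-1) mod n"
  have n0: "n > 0" using assms by (cases n) auto
  have tn: "t < n" unfolding t_def using n0 by simp
  obtain x y where xy: "e = {x, y}" "x < n" "y < n" "(x + y) mod n \<in> {t, Suc t mod n}"
    using zp_edge[OF assms e] unfolding t_def by blast
  obtain x' y' where xy': "f = {x', y'}" "x' < n" "y' < n" "(x' + y') mod n \<in> {t, Suc t mod n}"
    using zp_edge[OF assms f] unfolding t_def by blast
  show "\<not> crosses e f"
  proof
    assume "crosses e f"
    then obtain a b c d where abcd: "a < c" "c < b" "b < d"
      "(e = {a, b} \<and> f = {c, d}) \<or> (e = {c, d} \<and> f = {a, b})"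
      unfolding crosses_def by blast
    then show False
    proof (elim disjE conjE)
      assume "e = {a, b}" "f = {c, d}"
      then have "a + b = x + y" "c + d = x' + y'" "d < n" using xy xy' pair_sum
        by (auto simp: doubleton_eq_iff)
      then show False using no_cross_arith[OF abcd(1-3) _ _ _ tn] xy xy' by simp
    next
      assume "e = {c, d}" "f = {a, b}"
      then have "a + b = x' + y'" "c + d = x + y" "d < n" using xy xy' pair_sum
        by (auto simp: doubleton_eq_iff)
      then show False using no_cross_arith[OF abcd(1-3) _ _ _ tn] xy xy' by simp
    qed
  qed
qed

lemma fiber_le2:
  assumes "odd n" "\<forall>r<n. h r \<in> path_edges (zp n r)"
  shows "card {r. r < n \<and> h r = e} \<le> 2"
proof -
  define S1 where "S1 = {r. r < n \<and> (2*r) mod n = (\<Sum>e) mod n}"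
  define S2 where "S2 = {r. r < n \<and> (2*r) mod n = Suc (\<Sum>e) mod n}"
  have sub: "{r. r < n \<and> h r = e} \<subseteq> S1 \<union> S2"
  proof
    fix r assume "r \<in> {r. r < n \<and> h r = e}"
    then have r: "r < n" "h r = e" by auto
    have n0: "n > 0" using assms by (cases n) auto
    have "e \<in> path_edges (zp n r)" using assms(2) r by blast
    then obtain x y where xy: "e = {x, y}" "x \<noteq> y"
      "(x + y) mod n \<in> {(2*r+n-1) mod n, Suc ((2*r+n-1) mod n) mod n}"
      using zp_edge[OF assms(1) r(1)] by blast
    have se: "\<Sum>e = x + y" using xy by simp
    have suc: "Suc ((2*r+n-1) mod n) mod n = (2*r) mod n"
    proof -
      have "Suc ((2*r+n-1) mod n) mod n = Suc (2*r+n-1) mod n" by (simp add: mod_Suc_eq)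
      also have "Suc (2*r+n-1) = 2*r + n" using n0 by simp
      finally show ?thesis by simp
    qed
    from xy(3) show "r \<in> S1 \<union> S2"
    proof
      assume "(x + y) mod n = (2*r+n-1) mod n"
      then have "Suc ((x + y) mod n) mod n = (2*r) mod n" using suc by simp
      then have "Suc (x + y) mod n = (2*r) mod n" by (simp add: mod_Suc_eq)
      then show ?thesis unfolding S2_def se using r by simp
    next
      assume "(x + y) mod n \<in> {Suc ((2*r+n-1) mod n) mod n}"
      then show ?thesis unfolding S1_def se suc using r by simp
    qed
  qed
  have f1: "finite S1" "finite S2" unfolding S1_def S2_def by auto
  have "\<forall>a\<in>S1. \<forall>b\<in>S1. a = b"
  proof (intro ballI)
    fix a b assume "a \<in> S1" "b \<in> S1"
    then have "a < n" "b < n" "(2*a) mod n = (2*b) mod n" unfolding S1_def by auto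
    then show "a = b" by (rule dbl_inj[OF assms(1)])
  qed
  then have c1: "card S1 \<le> 1" using card_le_Suc0_iff_eq[OF f1(1)] by simp
  have "\<forall>a\<in>S2. \<forall>b\<in>S2. a = b"
  proof (intro ballI)
    fix a b assume "a \<in> S2" "b \<in> S2"
    then have "a < n" "b < n" "(2*a) mod n = (2*b) mod n" unfolding S2_def by auto
    then show "a = b" by (rule dbl_inj[OF assms(1)])
  qed
  then have c2: "card S2 \<le> 1" using card_le_Suc0_iff_eq[OF f1(2)] by simp
  have "card {r. r < n \<and> h r = e} \<le> card (S1 \<union> S2)"
    using card_mono[OF _ sub] f1 by simp
  also have "\<dots> \<le> card S1 + card S2" by (rule card_Un_le)
  finally show ?thesis using c1 c2 by simp
qed

theorem proposition1:
  fixes m :: nat and B :: "nat set set"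
  assumes "m \<ge> 2"
    and "B \<subseteq> ck_edges (2 * m - 1)"
    and "\<forall>p. simple_ham_path (2 * m - 1) p \<longrightarrow> B \<inter> path_edges p \<noteq> {}"
  shows "card B \<ge> m"
proof -
  define n where "n = 2 * m - 1"
  have odd: "odd n" unfolding n_def using assms(1) by presburger
  have "\<forall>r. \<exists>e. r < n \<longrightarrow> e \<in> B \<and> e \<in> path_edges (zp n r)"
    using assms(3) zp_ham[OF odd] unfolding n_def by blast
  then obtain h where h: "\<And>r. r < n \<Longrightarrow> h r \<in> B \<and> h r \<in> path_edges (zp n r)"
    by metis
  have finB: "finite B"
  proof (rule finite_subset[OF assms(2)])
    have "ck_edges (2 * m - 1) \<subseteq> Pow {0..<2*m-1}" unfolding ck_edges_def by auto
    then show "finite (ck_edges (2 * m - 1))" by (rule finite_subset) simp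
  qed
  have cov: "{0..<n} \<subseteq> (\<Union>e\<in>B. {r. r < n \<and> h r = e})" using h by auto
  have "n = card {0..<n}" by simp
  also have "\<dots> \<le> card (\<Union>e\<in>B. {r. r < n \<and> h r = e})"
    by (rule card_mono[OF _ cov]) (use finB in auto)
  also have "\<dots> \<le> (\<Sum>e\<in>B. card {r. r < n \<and> h r = e})" by (rule card_UN_le[OF finB])
  also have "\<dots> \<le> (\<Sum>e\<in>B. 2)"
    by (rule sum_mono) (use fiber_le2[OF odd] h in blast)
  also have "\<dots> = 2 * card B" by simp
  finally show ?thesis unfolding n_def by linarith
qed

end
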